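(* Let $k>0$ and let $Y_1,Y_2,\dots$ be i.i.d. qualities in $[0,1]$ whose gap $1-Y$ has cumulative distribution function $\Pr[1-Y\le x]=x^k$ for $x\in[0,1]$ (a power-law distribution). Fix $0\le \alpha<1$ and consider the threshold rule with $\mathcal{X}_0=[0,1]$ and $\mathcal{X}_i=\{y\in[0,1]: y\ge 1-c_i\}$ with $c_i=1/i^{\alpha}$ for $i\ge 1$. Then this threshold rule achieves an $O(1)$ approximation to the expected gap, i.e. there is a constant $C$ such that $E[\mathrm{Gap}_n]/E[\mathrm{Gap}^*_n]\le C$ for all $n$, where $C$ depends only on $\alpha$ and not on the parameter $k$ of the distribution.
   Context: Online selection: samples $Y_1,Y_2,\dots$ arrive one at a time; a threshold rule is a nested sequence of sets $\mathcal{X}_0\supseteq\mathcal{X}_1\supseteq\cdots$, and sample $Y_t$ is selected if and only if $Y_t\in\mathcal{X}_j$, where $j$ is the number of samples selected among $Y_1,\dots,Y_{t-1}$ (decisions are irrevocable). Let $T_n$ be the index of the $n$-th selected sample and $S_n$ the set of the $n$ selected samples. For a finite set $S$ of qualities, its mean quality gap is $\mathrm{Gap}(S)=1-\frac{1}{|S|}\sum_{y\in S}y$. Put $\mathrm{Gap}_n=\mathrm{Gap}(S_n)$ and $\mathrm{Gap}^*_n=\min\{\mathrm{Gap}(S): S\subseteq\{Y_1,\dots,Y_{T_n}\},|S|=n\}$ (the best $n$ among all samples seen up to the $n$-th selection). Expectations are over the random sample sequence. *)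

theory Defs
  imports "HOL-Probability.Probability"
begin

text \<open>A realization of the sample sequence is y :: nat => real, with y 0 = Y_1, y 1 = Y_2, ...
  (0-based indexing). A threshold rule is given by X :: nat => real set (X j = the set used
  after j selections).\<close>

fun nsel :: "(nat \<Rightarrow> real set) \<Rightarrow> (nat \<Rightarrow> real) \<Rightarrow> nat \<Rightarrow> nat" where
  "nsel X y 0 = 0"
| "nsel X y (Suc t) = nsel X y t + (if y t \<in> X (nsel X y t) then 1 else 0)"

definition selected :: "(nat \<Rightarrow> real set) \<Rightarrow> (nat \<Rightarrow> real) \<Rightarrow> nat \<Rightarrow> bool" where
  "selected X y t \<longleftrightarrow> y t \<in> X (nsel X y t)"

text \<open>0-based index of the n-th selected sample (T_n - 1 in the paper's 1-based indexing).\<close>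
definition sel_time :: "(nat \<Rightarrow> real set) \<Rightarrow> (nat \<Rightarrow> real) \<Rightarrow> nat \<Rightarrow> nat" where
  "sel_time X y n = (LEAST t. nsel X y (Suc t) = n)"

definition sel_set :: "(nat \<Rightarrow> real set) \<Rightarrow> (nat \<Rightarrow> real) \<Rightarrow> nat \<Rightarrow> nat set" where
  "sel_set X y n = {t. t \<le> sel_time X y n \<and> selected X y t}"

definition gap_of :: "(nat \<Rightarrow> real) \<Rightarrow> nat set \<Rightarrow> real" where
  "gap_of y I = 1 - (\<Sum>i\<in>I. y i) / real (card I)"

definition Gap :: "(nat \<Rightarrow> real set) \<Rightarrow> (nat \<Rightarrow> real) \<Rightarrow> nat \<Rightarrow> real" where
  "Gap X y n = gap_of y (sel_set X y n)"

definition Gap_opt :: "(nat \<Rightarrow> real set) \<Rightarrow> (nat \<Rightarrow> real) \<Rightarrow> nat \<Rightarrow> real" where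
  "Gap_opt X y n = Min (gap_of y ` {I. I \<subseteq> {0..sel_time X y n} \<and> card I = n})"

definition pow_thr :: "real \<Rightarrow> nat \<Rightarrow> real set" where
  "pow_thr \<alpha> i = (if i = 0 then {0..1} else {y \<in> {0..1}. y \<ge> 1 - 1 / (real i powr \<alpha>)})"

end

theory Submission
  imports Defs
begin


lemma nsel_Suc': "nsel X y (Suc t) = nsel X y t + (if selected X y t then 1 else 0)"
  by (simp add: selected_def)

lemma nsel_mono: "s \<le> t \<Longrightarrow> nsel X y s \<le> nsel X y t"
  by (induction t) (auto simp: le_Suc_eq)

lemma nsel_le: "nsel X y t \<le> t"
  by (induction t) auto

lemma nsel_local: "(\<And>i. i < t \<Longrightarrow> y i = z i) \<Longrightarrow> nsel X y t = nsel X z t"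
  by (induction t) auto

lemma card_S: "card {s. s < N \<and> selected X y s \<and> nsel X y s < m} = min (nsel X y N) m"
proof (induction N)
  case 0
  then show ?case by simp
next
  case (Suc N)
  let ?P = "\<lambda>s. selected X y s \<and> nsel X y s < m"
  have eq: "{s. s < Suc N \<and> ?P s} = {s. s < N \<and> ?P s} \<union> (if ?P N then {N} else {})"
    by (auto simp: less_Suc_eq)
  have fin: "finite {s. s < N \<and> ?P s}" by simp
  show ?case
    using Suc fin unfolding eq by (auto simp: selected_def card_insert_if)
qed

lemma exists_hit: "nsel X y N \<ge> n \<Longrightarrow> n \<ge> 1 \<Longrightarrow> \<exists>t<N. nsel X y (Suc t) = n"
proof (induction N)
  case 0
  then show ?case by simp
next
  case (Suc N)
  show ?case
  proof (cases "nsel X y N \<ge> n")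
    case True
    then show ?thesis using Suc by (meson less_SucI)
  next
    case False
    then have "nsel X y (Suc N) = n" using Suc.prems by (auto split: if_splits)
    then show ?thesis by blast
  qed
qed

locale reach =
  fixes X :: "nat \<Rightarrow> real set" and y :: "nat \<Rightarrow> real" and n N :: nat
  assumes n1: "n \<ge> 1" and reachN: "nsel X y N \<ge> n"
begin

definition "T = sel_time X y n"

lemma T_hit: "nsel X y (Suc T) = n" and T_lt: "T < N"
proof -
  obtain t where t: "t < N" "nsel X y (Suc t) = n" using exists_hit[OF reachN n1] by blast
  show "nsel X y (Suc T) = n" unfolding T_def sel_time_def by (rule LeastI[of _ t]) (use t in auto)
  have "T \<le> t" unfolding T_def sel_time_def by (rule Least_le) (use t in auto)
  then show "T < N" using t by simp
qed

lemma T_sel: "selected X y T" and T_ns: "nsel X y T = n - 1"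
proof -
  have min: "\<And>s. s < T \<Longrightarrow> nsel X y (Suc s) \<noteq> n"
    unfolding T_def sel_time_def by (rule not_less_Least)
  show "selected X y T"
  proof (rule ccontr)
    assume ns: "\<not> selected X y T"
    then have e: "nsel X y T = n" using T_hit by (simp add: selected_def)
    show False
    proof (cases T)
      case 0 then show ?thesis using e n1 by simp
    next
      case (Suc s) then show ?thesis using min[of s] e by simp
    qed
  qed
  then show "nsel X y T = n - 1" using T_hit by (simp add: selected_def)
qed

lemma le_T_iff: "t \<le> T \<longleftrightarrow> nsel X y t < n"
proof
  assume "t \<le> T" then show "nsel X y t < n" using nsel_mono[of t T X y] T_ns n1 by simp
next
  assume a: "nsel X y t < n"
  show "t \<le> T"
  proof (rule ccontr)
    assume "\<not> t \<le> T" then have "Suc T \<le> t" by simp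
    then show False using nsel_mono[of "Suc T" t X y] T_hit a by simp
  qed
qed

lemma sel_set_eq: "sel_set X y n = {t. selected X y t \<and> nsel X y t < n}"
  unfolding sel_set_def T_def[symmetric] using le_T_iff by auto

lemma sel_set_eqN: "sel_set X y n = {t. t < N \<and> selected X y t \<and> nsel X y t < n}"
  unfolding sel_set_eq using le_T_iff T_lt by (auto dest: le_less_trans[of _ T N])

lemma card_sel_set: "card (sel_set X y n) = n"
  unfolding sel_set_eqN card_S using reachN by simp

lemma fin_sel_set: "finite (sel_set X y n)"
  unfolding sel_set_eqN by simp

lemma sel_set_sub: "sel_set X y n \<subseteq> {0..T}"
  unfolding sel_set_def T_def by auto

end


definition cc :: "real \<Rightarrow> nat \<Rightarrow> real" where
  "cc \<alpha> j = (if j = 0 then 1 else 1 / real j powr \<alpha>)"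

lemma cc_pos: "0 < cc \<alpha> j"
  by (simp add: cc_def)

lemma cc_le1: "0 \<le> \<alpha> \<Longrightarrow> cc \<alpha> j \<le> 1"
  by (auto simp: cc_def ge_one_powr_ge_zero)

lemma cc_anti: "0 \<le> \<alpha> \<Longrightarrow> i \<le> j \<Longrightarrow> cc \<alpha> j \<le> cc \<alpha> i"
  apply (cases "i = 0")
  using cc_le1 apply (simp add: cc_def)
  apply (simp add: cc_def)
  by (simp add: frac_le powr_mono2)

lemma pow_thr_iff: "0 \<le> \<alpha> \<Longrightarrow> y \<in> pow_thr \<alpha> j \<longleftrightarrow> 0 \<le> 1 - y \<and> 1 - y \<le> cc \<alpha> j"
proof -
  assume a: "0 \<le> \<alpha>"
  show ?thesis
  proof (cases "j = 0")
    case True then show ?thesis by (auto simp: pow_thr_def cc_def)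
  next
    case False
    define q where "q = 1 / real j powr \<alpha>"
    have e1: "cc \<alpha> j = q" using False by (simp add: cc_def q_def)
    have h: "q \<le> 1" using cc_le1[OF a, of j] e1 by simp
    have e2: "pow_thr \<alpha> j = {y\<in>{0..1}. y \<ge> 1 - q}" using False by (simp add: pow_thr_def q_def)
    show ?thesis using h unfolding e1 e2 by auto
  qed
qed

lemma sum_ind: "(\<Sum>t<(N::nat). g t * (if P t then 1 else 0)) = (\<Sum>t\<in>{t. t < N \<and> P t}. (g t :: real))"
proof -
  have "{t. t < N \<and> P t} = {t\<in>{..<N}. P t}" by auto
  moreover have "sum g {t\<in>{..<N}. P t} = (\<Sum>t<N. if P t then g t else 0)" by (rule sum.inter_filter) (rule finite_lessThan)
  ultimately have "sum g {t. t < N \<and> P t} = (\<Sum>t<N. if P t then g t else 0)" by simp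
  then show ?thesis by (simp add: if_distrib cong: if_cong)
qed

lemma gap_of_le1: "(\<And>t. 0 \<le> y t) \<Longrightarrow> gap_of y I \<le> 1"
  unfolding gap_of_def by (simp add: sum_nonneg)

lemma gap_up:
  assumes y01: "\<And>t. 0 \<le> y t \<and> y t \<le> 1" and n1: "n \<ge> 1"
  shows "real n * Gap X y n \<le> (\<Sum>t<N. (1 - y t) * (if selected X y t \<and> nsel X y t < n then 1 else 0))
            + real n * (if nsel X y N < n then 1 else 0)"
proof (cases "nsel X y N < n")
  case True
  have "Gap X y n \<le> 1" unfolding Gap_def using y01 by (intro gap_of_le1) auto
  moreover have "0 \<le> (\<Sum>t<N. (1 - y t) * (if selected X y t \<and> nsel X y t < n then 1 else 0))"
    using y01 by (intro sum_nonneg) auto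
  moreover have "real n * Gap X y n \<le> real n" using \<open>Gap X y n \<le> 1\<close> by (simp add: mult_left_le)
  moreover have "real n * (if nsel X y N < n then 1 else 0) = real n" using True by simp
  ultimately show ?thesis by linarith
next
  case False
  interpret reach X y n N using n1 False by unfold_locales auto
  have "real n * Gap X y n = real n - (\<Sum>t\<in>sel_set X y n. y t)"
    unfolding Gap_def gap_of_def card_sel_set using n1 by (simp add: algebra_simps)
  also have "\<dots> = (\<Sum>t\<in>sel_set X y n. 1 - y t)"
    by (simp add: sum_subtractf card_sel_set)
  also have "\<dots> = (\<Sum>t<N. (1 - y t) * (if selected X y t \<and> nsel X y t < n then 1 else 0))"
    unfolding sum_ind sel_set_eqN ..
  finally show ?thesis using False by simp
qed

lemma exchange:
  fixes m :: "nat \<Rightarrow> real"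
  assumes "finite I" "finite S" "card I = card S"
    and "\<And>t. t \<in> I - S \<Longrightarrow> m t = c" and "\<And>t. t \<in> S - I \<Longrightarrow> m t \<le> c"
  shows "sum m S \<le> sum m I"
proof -
  have cI: "card I = card (I \<inter> S) + card (I - S)"
    using assms(1) by (metis card_Int_Diff)
  have cS: "card S = card (S \<inter> I) + card (S - I)"
    using assms(2) by (metis card_Int_Diff)
  have cd: "card (S - I) = card (I - S)" using cI cS assms(3) by (simp add: Int_commute)
  have "sum m S = sum m (S \<inter> I) + sum m (S - I)"
    using assms(2) by (metis sum.Int_Diff)
  also have "sum m (S - I) \<le> (\<Sum>t\<in>S - I. c)" using assms(5) by (intro sum_mono) auto
  also have "\<dots> = (\<Sum>t\<in>I - S. m t)" using cd assms(4) by simp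
  also have "sum m (S \<inter> I) + (\<Sum>t\<in>I - S. m t) = sum m I"
    using assms(1) by (metis Int_commute sum.Int_Diff)
  finally show ?thesis by simp
qed

lemma gapopt_low:
  assumes y01: "\<And>t. 0 \<le> y t \<and> y t \<le> 1" and n1: "n \<ge> 1" and a0: "0 \<le> \<alpha>"
    and reachN: "nsel (pow_thr \<alpha>) y N0 \<ge> n"
  shows "(\<Sum>t<N. min (1 - y t) (cc \<alpha> (n - 1)) *
            (if selected (pow_thr \<alpha>) y t \<and> nsel (pow_thr \<alpha>) y t < n then 1 else 0))
           \<le> real n * Gap_opt (pow_thr \<alpha>) y n"
proof -
  let ?X = "pow_thr \<alpha>"
  let ?c = "cc \<alpha> (n - 1)"
  define m where "m t = min (1 - y t) ?c" for t
  interpret reach ?X y n N0 using n1 reachN by unfold_locales auto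
  let ?S = "sel_set ?X y n"
  define Fam where "Fam = {I. I \<subseteq> {0..T} \<and> card I = n}"
  have finF: "finite Fam" unfolding Fam_def
    by (rule finite_subset[of _ "Pow {0..T}"]) auto
  have SF: "?S \<in> Fam" unfolding Fam_def using sel_set_sub card_sel_set by auto
  have "Gap_opt ?X y n = Min (gap_of y ` Fam)" unfolding Gap_opt_def Fam_def T_def ..
  also have "\<dots> \<in> gap_of y ` Fam" using finF SF by (intro Min_in) auto
  finally obtain I where I: "I \<in> Fam" "Gap_opt ?X y n = gap_of y I" by blast
  have finI: "finite I" using I(1) unfolding Fam_def by (auto intro: finite_subset)
  have cardI: "card I = n" using I(1) unfolding Fam_def by auto
  have "(\<Sum>t<N. m t * (if selected ?X y t \<and> nsel ?X y t < n then 1 else 0))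
        = sum m {t. t < N \<and> selected ?X y t \<and> nsel ?X y t < n}" by (rule sum_ind)
  also have "\<dots> \<le> sum m ?S"
  proof (rule sum_mono2[OF fin_sel_set])
    show "{t. t < N \<and> selected ?X y t \<and> nsel ?X y t < n} \<subseteq> ?S" unfolding sel_set_eq by auto
    show "\<And>b. b \<in> ?S - {t. t < N \<and> selected ?X y t \<and> nsel ?X y t < n} \<Longrightarrow> 0 \<le> m b"
      unfolding m_def using y01 cc_pos[of \<alpha> "n-1"] by auto
  qed
  also have "\<dots> \<le> sum m I"
  proof (rule exchange[OF finI fin_sel_set])
    show "card I = card ?S" using cardI card_sel_set by simp
    show "m t \<le> ?c" if "t \<in> ?S - I" for t unfolding m_def by simp
    show "m t = ?c" if t: "t \<in> I - ?S" for t
    proof -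
      have tT: "t \<le> T" using t I(1) unfolding Fam_def by auto
      then have ns: "nsel ?X y t < n" using le_T_iff by simp
      have "\<not> selected ?X y t" using t tT unfolding sel_set_def T_def by auto
      then have "\<not> (0 \<le> 1 - y t \<and> 1 - y t \<le> cc \<alpha> (nsel ?X y t))"
        unfolding selected_def using pow_thr_iff[OF a0] by blast
      then have "1 - y t > cc \<alpha> (nsel ?X y t)" using y01[of t] by auto
      moreover have "cc \<alpha> (n - 1) \<le> cc \<alpha> (nsel ?X y t)" using ns by (intro cc_anti a0) auto
      ultimately show ?thesis unfolding m_def by simp
    qed
  qed
  also have "\<dots> \<le> (\<Sum>t\<in>I. 1 - y t)" unfolding m_def by (intro sum_mono) auto
  also have "\<dots> = real n * gap_of y I"
    unfolding gap_of_def using n1 by (simp add: sum_subtractf algebra_simps cardI)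
  finally show ?thesis unfolding m_def I(2) .
qed

lemma hp1: "(x::real) > 0 \<Longrightarrow> x / x powr a = x powr (1 - a)"
  by (simp add: powr_diff)
lemma hp2: "(x::real) > 0 \<Longrightarrow> r / x powr a = r * x powr (-a)"
  by (simp add: powr_minus_divide)
lemma hp3: "(m::real) \<ge> 1 \<Longrightarrow> 0 < r \<Longrightarrow> 1 \<le> m powr r"
  by (simp add: ge_one_powr_ge_zero)
lemma hp4: "(m::real) \<ge> 1 \<Longrightarrow> m powr (1 - a) = m * m powr (-a)"
  by (simp add: powr_mult_base)

lemma powr_step:
  fixes m :: nat and \<alpha> :: real
  assumes a0: "0 \<le> \<alpha>" and a1: "\<alpha> < 1"
  shows "(1 - \<alpha>) * real (Suc m) powr (-\<alpha>) \<le> real (Suc m) powr (1 - \<alpha>) - real m powr (1 - \<alpha>)"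
proof (cases "m = 0")
  case True then show ?thesis using a0 a1 by simp
next
  case False
  let ?r = "1 - \<alpha>"
  have mp: "real m > 0" using False by simp
  have Y: "real m powr ?r * real (Suc m) powr \<alpha> \<le> ?r * real m + \<alpha> * real (Suc m)"
    using Youngs_inequality_0[of ?r \<alpha> "real m" "real (Suc m)"] a0 a1 mp by simp
  have e: "?r * real m + \<alpha> * real (Suc m) = real (Suc m) - ?r" by (simp add: algebra_simps)
  have pos: "real (Suc m) powr \<alpha> > 0" by simp
  have "real m powr ?r \<le> (real (Suc m) - ?r) / real (Suc m) powr \<alpha>"
    using Y e pos by (simp add: pos_le_divide_eq)
  also have "\<dots> = real (Suc m) / real (Suc m) powr \<alpha> - ?r / real (Suc m) powr \<alpha>"
    by (rule diff_divide_distrib)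
  also have "real (Suc m) / real (Suc m) powr \<alpha> = real (Suc m) powr ?r"
    by (rule hp1) simp
  also have "?r / real (Suc m) powr \<alpha> = ?r * real (Suc m) powr (-\<alpha>)"
    by (rule hp2) simp
  finally show ?thesis by simp
qed

lemma harm_bound:
  fixes \<alpha> :: real
  assumes a0: "0 \<le> \<alpha>" and a1: "\<alpha> < 1"
  shows "(1 - \<alpha>) * (\<Sum>j<m. real (Suc j) powr (-\<alpha>)) \<le> real m powr (1 - \<alpha>)"
proof (induction m)
  case 0 then show ?case by simp
next
  case (Suc m)
  then show ?case using powr_step[OF a0 a1, of m] by (simp add: algebra_simps)
qed

lemma sum_cc_bound:
  fixes \<alpha> :: real
  assumes a0: "0 \<le> \<alpha>" and a1: "\<alpha> < 1" and n1: "n \<ge> 1"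
  shows "(\<Sum>j<n. cc \<alpha> j) \<le> (2 / (1 - \<alpha>)) * (real n * cc \<alpha> (n - 1))"
proof -
  obtain m where nm: "n = Suc m" using n1 by (cases n) auto
  let ?r = "1 - \<alpha>"
  have r: "0 < ?r" "?r \<le> 1" using a0 a1 by auto
  have s: "(\<Sum>j<n. cc \<alpha> j) = 1 + (\<Sum>j<m. real (Suc j) powr (-\<alpha>))"
    unfolding nm sum.lessThan_Suc_shift by (simp add: cc_def powr_minus_divide)
  show ?thesis
  proof (cases "m = 0")
    case True
    then show ?thesis using s nm r by (simp add: cc_def field_simps)
  next
    case False
    let ?q = "real m powr (-\<alpha>)"
    have mp: "real m \<ge> 1" using False by simp
    have ccq: "cc \<alpha> (n - 1) = ?q" using False nm by (simp add: cc_def powr_minus_divide)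
    have mr: "real m powr ?r = real m * ?q"
      using mp by (rule hp4)
    have q1: "1 \<le> real m * ?q"
      using hp3[OF mp r(1)] mr by simp
    have qpos: "0 \<le> ?q" by simp
    have H: "?r * (\<Sum>j<m. real (Suc j) powr (-\<alpha>)) \<le> real m * ?q"
      using harm_bound[OF a0 a1, of m] mr by simp
    have "?r * (\<Sum>j<n. cc \<alpha> j) \<le> ?r + real m * ?q" using s H by (simp add: algebra_simps)
    also have "\<dots> \<le> 2 * (real m * ?q)" using q1 r by simp
    also have "\<dots> \<le> 2 * (real n * ?q)" using nm qpos by (simp add: mult_right_mono)
    finally have "?r * (\<Sum>j<n. cc \<alpha> j) \<le> 2 * (real n * cc \<alpha> (n - 1))" unfolding ccq .
    then show ?thesis using r by (simp add: field_simps)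
  qed
qed

lemma pow_thr_borel: "0 \<le> \<alpha> \<Longrightarrow> pow_thr \<alpha> j \<in> sets borel"
proof -
  assume a: "0 \<le> \<alpha>"
  have "pow_thr \<alpha> j = {y \<in> space borel. 0 \<le> 1 - y \<and> 1 - y \<le> cc \<alpha> j}"
    using pow_thr_iff[OF a] by auto
  also have "\<dots> \<in> sets borel" by measurable
  finally show ?thesis .
qed

lemma nsel_measurable:
  assumes f: "\<And>i. i < t \<Longrightarrow> (\<lambda>\<omega>. f \<omega> i) \<in> borel_measurable N"
    and X: "\<And>j. X j \<in> sets borel"
  shows "(\<lambda>\<omega>. nsel X (f \<omega>) t) \<in> measurable N (count_space UNIV)"
  using f
proof (induction t)
  case 0
  then show ?case by simp
next
  case (Suc t)
  have g: "(\<lambda>\<omega>. nsel X (f \<omega>) t) \<in> measurable N (count_space UNIV)"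
    using Suc by auto
  have ft: "(\<lambda>\<omega>. f \<omega> t) \<in> borel_measurable N" using Suc by auto
  have F: "(\<lambda>\<omega>. j + (if f \<omega> t \<in> X j then 1 else 0)) \<in> measurable N (count_space UNIV)" for j :: nat
  proof -
    have "{\<omega> \<in> space N. f \<omega> t \<in> X j} \<in> sets N"
      using measurable_sets[OF ft X[of j]] by (simp add: vimage_def Int_def conj_commute)
    moreover have "(\<lambda>\<omega>. j + (if f \<omega> t \<in> X j then 1 else 0)) = (\<lambda>\<omega>. if f \<omega> t \<in> X j then j + 1 else j)"
      by auto
    ultimately show ?thesis by (simp add: measurable_If)
  qed
  have "(\<lambda>\<omega>. (\<lambda>j \<omega>. j + (if f \<omega> t \<in> X j then 1 else 0)) (nsel X (f \<omega>) t) \<omega>)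
        \<in> measurable N (count_space UNIV)"
    by (rule measurable_compose_countable'[OF F g]) auto
  then show ?case by simp
qed

locale model = prob_space M for M :: "(nat \<Rightarrow> real) measure" +
  fixes k \<alpha> :: real and Y :: "nat \<Rightarrow> (nat \<Rightarrow> real) \<Rightarrow> real"
  assumes kpos: "k > 0" and a0: "0 \<le> \<alpha>" and a1: "\<alpha> < 1"
    and Ym[measurable]: "\<And>i. Y i \<in> borel_measurable M"
    and indepY: "indep_vars (\<lambda>_. borel) Y UNIV"
    and cdfY: "\<And>i x. 0 \<le> x \<Longrightarrow> x \<le> 1 \<Longrightarrow> measure M {\<omega> \<in> space M. 1 - Y i \<omega> \<le> x} = x powr k"
begin

abbreviation "X \<equiv> pow_thr \<alpha>"

definition ns :: "nat \<Rightarrow> (nat \<Rightarrow> real) \<Rightarrow> nat" where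
  "ns t \<omega> = nsel X (\<lambda>i. Y i \<omega>) t"

lemma X_borel[measurable]: "X j \<in> sets borel"
  using pow_thr_borel[OF a0] .

lemma ns_meas[measurable]: "ns t \<in> measurable M (count_space UNIV)"
  unfolding ns_def by (rule nsel_measurable) auto

lemma cdf_all: "measure M {\<omega> \<in> space M. 1 - Y i \<omega> \<le> z} =
    (if z < 0 then 0 else if z \<le> 1 then z powr k else 1)"
proof -
  have sets: "{\<omega> \<in> space M. 1 - Y i \<omega> \<le> z} \<in> sets M" for z by measurable
  show ?thesis
  proof (cases "z < 0")
    case True
    have "measure M {\<omega> \<in> space M. 1 - Y i \<omega> \<le> z} \<le> measure M {\<omega> \<in> space M. 1 - Y i \<omega> \<le> 0}"
      using True by (intro finite_measure_mono sets) auto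
    also have "\<dots> = 0" using cdfY[of 0 i] by simp
    finally show ?thesis using True measure_nonneg[of M] by (simp add: antisym)
  next
    case False
    show ?thesis
    proof (cases "z \<le> 1")
      case True then show ?thesis using False cdfY by simp
    next
      case F2: False
      have "measure M {\<omega> \<in> space M. 1 - Y i \<omega> \<le> 1} \<le> measure M {\<omega> \<in> space M. 1 - Y i \<omega> \<le> z}"
        using F2 by (intro finite_measure_mono sets) auto
      then have "1 \<le> measure M {\<omega> \<in> space M. 1 - Y i \<omega> \<le> z}" using cdfY[of 1 i] by simp
      then show ?thesis using F2 False prob_le_1 by (simp add: antisym)
    qed
  qed
qed

lemma cdf_Ioc:
  assumes "a \<le> b"
  shows "measure M {\<omega> \<in> space M. a < 1 - Y i \<omega> \<and> 1 - Y i \<omega> \<le> b} =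
     measure M {\<omega> \<in> space M. 1 - Y i \<omega> \<le> b} - measure M {\<omega> \<in> space M. 1 - Y i \<omega> \<le> a}"
proof -
  have e: "{\<omega> \<in> space M. a < 1 - Y i \<omega> \<and> 1 - Y i \<omega> \<le> b} =
      {\<omega> \<in> space M. 1 - Y i \<omega> \<le> b} - {\<omega> \<in> space M. 1 - Y i \<omega> \<le> a}" by auto
  have s1: "{\<omega> \<in> space M. 1 - Y i \<omega> \<le> b} \<in> sets M" by measurable
  have s2: "{\<omega> \<in> space M. 1 - Y i \<omega> \<le> a} \<in> sets M" by measurable
  have sub: "{\<omega> \<in> space M. 1 - Y i \<omega> \<le> a} \<subseteq> {\<omega> \<in> space M. 1 - Y i \<omega> \<le> b}"
    using assms by auto
  show ?thesis unfolding e by (rule finite_measure_Diff[OF s1 s2 sub])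
qed

lemma P_lt0: "measure M {\<omega> \<in> space M. 1 - Y i \<omega> < 0} = 0"
proof -
  have "measure M {\<omega> \<in> space M. 1 - Y i \<omega> < 0} \<le> measure M {\<omega> \<in> space M. 1 - Y i \<omega> \<le> 0}"
    by (intro finite_measure_mono) auto
  also have "\<dots> = 0" using cdfY[of 0 i] by simp
  finally show ?thesis using measure_nonneg[of M] by (simp add: antisym)
qed

lemma P_gt1: "measure M {\<omega> \<in> space M. 1 - Y i \<omega> > 1} = 0"
proof -
  have "{\<omega> \<in> space M. 1 - Y i \<omega> > 1} = space M - {\<omega> \<in> space M. 1 - Y i \<omega> \<le> 1}" by auto
  then show ?thesis using prob_compl[of "{\<omega> \<in> space M. 1 - Y i \<omega> \<le> 1}"] cdfY[of 1 i] by simp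
qed

lemma AE_Y01: "AE \<omega> in M. 0 \<le> Y i \<omega> \<and> Y i \<omega> \<le> 1"
proof -
  have "{\<omega> \<in> space M. \<not> (0 \<le> Y i \<omega> \<and> Y i \<omega> \<le> 1)} =
     {\<omega> \<in> space M. 1 - Y i \<omega> > 1} \<union> {\<omega> \<in> space M. 1 - Y i \<omega> < 0}" by auto
  moreover have "measure M ({\<omega> \<in> space M. 1 - Y i \<omega> > 1} \<union> {\<omega> \<in> space M. 1 - Y i \<omega> < 0}) = 0"
  proof -
    have "measure M ({\<omega> \<in> space M. 1 - Y i \<omega> > 1} \<union> {\<omega> \<in> space M. 1 - Y i \<omega> < 0})
       \<le> measure M {\<omega> \<in> space M. 1 - Y i \<omega> > 1} + measure M {\<omega> \<in> space M. 1 - Y i \<omega> < 0}"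
      by (intro measure_Un_le) auto
    then show ?thesis using P_lt0 P_gt1 measure_nonneg[of M] by (simp add: antisym)
  qed
  ultimately show ?thesis
    by (subst AE_iff_measurable[OF _ refl]) (auto simp: emeasure_eq_measure)
qed

lemma AE_all01: "AE \<omega> in M. \<forall>i. 0 \<le> Y i \<omega> \<and> Y i \<omega> \<le> 1"
  using AE_Y01 by (simp add: AE_all_countable)

lemma P_X: 
  assumes c: "0 \<le> c" "c \<le> 1"
  shows "measure M {\<omega> \<in> space M. 0 \<le> 1 - Y i \<omega> \<and> 1 - Y i \<omega> \<le> c} = c powr k"
proof -
  have e: "{\<omega> \<in> space M. 0 \<le> 1 - Y i \<omega> \<and> 1 - Y i \<omega> \<le> c} =
      {\<omega> \<in> space M. 1 - Y i \<omega> \<le> c} - {\<omega> \<in> space M. 1 - Y i \<omega> < 0}" by auto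
  have s1: "{\<omega> \<in> space M. 1 - Y i \<omega> \<le> c} \<in> sets M" by measurable
  have s2: "{\<omega> \<in> space M. 1 - Y i \<omega> < 0} \<in> sets M" by measurable
  have sub: "{\<omega> \<in> space M. 1 - Y i \<omega> < 0} \<subseteq> {\<omega> \<in> space M. 1 - Y i \<omega> \<le> c}"
    using c by auto
  have "measure M {\<omega> \<in> space M. 0 \<le> 1 - Y i \<omega> \<and> 1 - Y i \<omega> \<le> c} =
     measure M {\<omega> \<in> space M. 1 - Y i \<omega> \<le> c} - measure M {\<omega> \<in> space M. 1 - Y i \<omega> < 0}"
    unfolding e by (rule finite_measure_Diff[OF s1 s2 sub])
  then show ?thesis using P_lt0[of i] cdfY[OF c, of i] by simp
qed

end
context model
begin

lemma scale:
  assumes c: "0 < c" "c \<le> 1"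
  shows "(\<integral>\<omega>. indicator {0<..c} (1 - Y t \<omega>) * (1 - Y t \<omega>) \<partial>M) = c powr k * c * (\<integral>\<omega>. 1 - Y 0 \<omega> \<partial>M)"
proof -
  define G where "G = (\<lambda>\<omega>. 1 - Y t \<omega>)"
  define H where "H = (\<lambda>\<omega>. c * (1 - Y 0 \<omega>))"
  have Gm[measurable]: "G \<in> borel_measurable M" unfolding G_def by measurable
  have Hm[measurable]: "H \<in> borel_measurable M" unfolding H_def by measurable
  define N1 where "N1 = density (distr M borel G) (\<lambda>y. ennreal (indicator {0<..c} y))"
  define N2 where "N2 = density (distr M borel H) (\<lambda>_. ennreal (c powr k))"
  define V where "V x = (if x < 0 then c powr k else if x < c then c powr k - x powr k else 0)" for x
  have V1: "emeasure N1 {x<..} = ennreal (V x)" for x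
  proof -
    define u where "u = max 0 x"
    have "emeasure N1 {x<..} = (\<integral>\<^sup>+y. ennreal (indicator {0<..c} y) * indicator {x<..} y \<partial>distr M borel G)"
      unfolding N1_def by (rule emeasure_density) auto
    also have "\<dots> = (\<integral>\<^sup>+y. indicator {u<..c} y \<partial>distr M borel G)"
      by (intro nn_integral_cong) (auto simp: indicator_def u_def)
    also have "\<dots> = emeasure (distr M borel G) {u<..c}" by simp
    also have "\<dots> = emeasure M (G -` {u<..c} \<inter> space M)" by (rule emeasure_distr) auto
    also have "G -` {u<..c} \<inter> space M = {\<omega> \<in> space M. u < 1 - Y t \<omega> \<and> 1 - Y t \<omega> \<le> c}"
      unfolding G_def by auto
    also have "emeasure M \<dots> = ennreal (measure M {\<omega> \<in> space M. u < 1 - Y t \<omega> \<and> 1 - Y t \<omega> \<le> c})"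
      by (simp add: emeasure_eq_measure)
    also have "measure M {\<omega> \<in> space M. u < 1 - Y t \<omega> \<and> 1 - Y t \<omega> \<le> c} = V x"
    proof (cases "u < c")
      case True
      have u01: "0 \<le> u" "u \<le> 1" using True c unfolding u_def by auto
      have "measure M {\<omega> \<in> space M. u < 1 - Y t \<omega> \<and> 1 - Y t \<omega> \<le> c} = c powr k - u powr k"
        using cdf_Ioc[of u c t] True cdf_all[of t c] cdf_all[of t u] u01 c by simp
      then show ?thesis using True c unfolding V_def u_def by (auto simp: max_def)
    next
      case False
      then have "{\<omega> \<in> space M. u < 1 - Y t \<omega> \<and> 1 - Y t \<omega> \<le> c} = {}" by auto
      then have "measure M {\<omega> \<in> space M. u < 1 - Y t \<omega> \<and> 1 - Y t \<omega> \<le> c} = 0"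
        by (metis measure_empty)
      then show ?thesis using False c unfolding V_def u_def by (auto simp: max_def)
    qed
    finally show ?thesis .
  qed
  have V2: "emeasure N2 {x<..} = ennreal (V x)" for x
  proof -
    have "emeasure N2 {x<..} = (\<integral>\<^sup>+y. ennreal (c powr k) * indicator {x<..} y \<partial>distr M borel H)"
      unfolding N2_def by (rule emeasure_density) auto
    also have "\<dots> = ennreal (c powr k) * emeasure (distr M borel H) {x<..}"
      by (rule nn_integral_cmult_indicator) auto
    also have "emeasure (distr M borel H) {x<..} = emeasure M (H -` {x<..} \<inter> space M)"
      by (rule emeasure_distr) auto
    also have "H -` {x<..} \<inter> space M = space M - {\<omega> \<in> space M. 1 - Y 0 \<omega> \<le> x / c}"
      unfolding H_def using c by (auto simp: field_simps)
    also have "emeasure M \<dots> = ennreal (1 - measure M {\<omega> \<in> space M. 1 - Y 0 \<omega> \<le> x / c})"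
      by (subst emeasure_eq_measure, subst prob_compl) auto
    also have "ennreal (c powr k) * ennreal (1 - measure M {\<omega> \<in> space M. 1 - Y 0 \<omega> \<le> x / c})
        = ennreal (c powr k * (1 - measure M {\<omega> \<in> space M. 1 - Y 0 \<omega> \<le> x / c}))"
      by (rule ennreal_mult''[symmetric]) simp
    also have "c powr k * (1 - measure M {\<omega> \<in> space M. 1 - Y 0 \<omega> \<le> x / c}) = V x"
    proof -
      have F: "measure M {\<omega> \<in> space M. 1 - Y 0 \<omega> \<le> x / c} =
        (if x / c < 0 then 0 else if x / c \<le> 1 then (x / c) powr k else 1)" by (rule cdf_all)
      show ?thesis
      proof (cases "x < 0")
        case True
        then have "x / c < 0" using c by (simp add: divide_neg_pos)
        then show ?thesis using True F unfolding V_def by simp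
      next
        case False
        show ?thesis
        proof (cases "x < c")
          case True
          have "x / c \<le> 1" using True c by simp
          moreover have "\<not> x / c < 0" using False c by (simp add: not_less)
          ultimately show ?thesis using True False F c unfolding V_def
            by (simp add: powr_divide right_diff_distrib)
        next
          case F2: False
          have "x / c \<ge> 1" using F2 c by simp
          then have "measure M {\<omega> \<in> space M. 1 - Y 0 \<omega> \<le> x / c} = 1" using F by auto
          then show ?thesis using F2 False unfolding V_def by simp
        qed
      qed
    qed
    finally show ?thesis .
  qed
  have "N1 = N2"
  proof (rule measure_eqI_lessThan)
    show "sets N1 = sets borel" "sets N2 = sets borel" unfolding N1_def N2_def by auto
    show "emeasure N1 {x<..} < \<infinity>" for x using V1 by simp
    show "emeasure N1 {x<..} = emeasure N2 {x<..}" for x using V1 V2 by simp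
  qed
  then have eqI: "(\<integral>y. y \<partial>N1) = (\<integral>y. y \<partial>N2)" by simp
  have "(\<integral>y. y \<partial>N1) = (\<integral>y. indicator {0<..c} y *\<^sub>R y \<partial>distr M borel G)"
    unfolding N1_def by (rule integral_density) auto
  also have "\<dots> = (\<integral>\<omega>. indicator {0<..c} (G \<omega>) *\<^sub>R G \<omega> \<partial>M)"
    by (rule integral_distr) auto
  finally have i1: "(\<integral>y. y \<partial>N1) = (\<integral>\<omega>. indicator {0<..c} (1 - Y t \<omega>) * (1 - Y t \<omega>) \<partial>M)"
    unfolding G_def by simp
  have "(\<integral>y. y \<partial>N2) = (\<integral>y. c powr k *\<^sub>R y \<partial>distr M borel H)"
    unfolding N2_def by (rule integral_density) auto
  also have "\<dots> = (\<integral>\<omega>. c powr k *\<^sub>R H \<omega> \<partial>M)"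
    by (rule integral_distr) auto
  also have "\<dots> = c powr k * c * (\<integral>\<omega>. 1 - Y 0 \<omega> \<partial>M)"
    unfolding H_def by simp
  finally show ?thesis using i1 eqI by simp
qed

end
context model
begin

lemma ind_ns_meas[measurable]: "(\<lambda>\<omega>. indicator {j} (ns t \<omega>) :: real) \<in> borel_measurable M"
  by (rule measurable_compose[OF ns_meas]) simp

lemma indep_ns:
  fixes h :: "real \<Rightarrow> real"
  assumes h[measurable]: "h \<in> borel_measurable borel" and hb: "\<And>y. \<bar>h y\<bar> \<le> B"
  shows "(\<integral>\<omega>. indicator {j} (ns t \<omega>) * h (Y t \<omega>) \<partial>M) =
           (\<integral>\<omega>. indicator {j} (ns t \<omega>) \<partial>M) * (\<integral>\<omega>. h (Y t \<omega>) \<partial>M)"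
proof -
  have I: "indep_var (PiM {..<t} (\<lambda>_. borel)) (\<lambda>\<omega>. restrict (\<lambda>i. Y i \<omega>) {..<t})
                     (PiM {t} (\<lambda>_. borel)) (\<lambda>\<omega>. restrict (\<lambda>i. Y i \<omega>) {t})"
    by (rule indep_var_restrict[OF indepY]) auto
  define g1 where "g1 v = (indicator {j} (nsel X v t) :: real)" for v :: "nat \<Rightarrow> real"
  define g2 where "g2 v = h (v t)" for v :: "nat \<Rightarrow> real"
  have ns1: "(\<lambda>v. nsel X v t) \<in> measurable (PiM {..<t} (\<lambda>_. borel)) (count_space UNIV)"
    by (rule nsel_measurable) auto
  have m1: "g1 \<in> borel_measurable (PiM {..<t} (\<lambda>_. borel))"
    unfolding g1_def by (rule measurable_compose[OF ns1]) simp
  have m2: "g2 \<in> borel_measurable (PiM {t} (\<lambda>_. borel))"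
    unfolding g2_def by measurable
  have I2: "indep_var borel (g1 \<circ> (\<lambda>\<omega>. restrict (\<lambda>i. Y i \<omega>) {..<t}))
                      borel (g2 \<circ> (\<lambda>\<omega>. restrict (\<lambda>i. Y i \<omega>) {t}))"
    by (rule indep_var_compose[OF I m1 m2])
  have e1: "g1 \<circ> (\<lambda>\<omega>. restrict (\<lambda>i. Y i \<omega>) {..<t}) = (\<lambda>\<omega>. indicator {j} (ns t \<omega>))"
  proof
    fix \<omega>
    have "nsel X (restrict (\<lambda>i. Y i \<omega>) {..<t}) t = nsel X (\<lambda>i. Y i \<omega>) t"
      by (rule nsel_local) auto
    then show "(g1 \<circ> (\<lambda>\<omega>. restrict (\<lambda>i. Y i \<omega>) {..<t})) \<omega> = indicator {j} (ns t \<omega>)"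
      unfolding g1_def ns_def by simp
  qed
  have e2: "g2 \<circ> (\<lambda>\<omega>. restrict (\<lambda>i. Y i \<omega>) {t}) = (\<lambda>\<omega>. h (Y t \<omega>))"
    unfolding g2_def by auto
  have I3: "indep_var borel (\<lambda>\<omega>. indicator {j} (ns t \<omega>) :: real) borel (\<lambda>\<omega>. h (Y t \<omega>))"
    using I2 unfolding e1 e2 .
  have int1: "integrable M (\<lambda>\<omega>. indicator {j} (ns t \<omega>) :: real)"
    by (rule integrable_const_bound[where B=1]) auto
  have int2: "integrable M (\<lambda>\<omega>. h (Y t \<omega>))"
    by (rule integrable_const_bound[where B=B]) (auto simp: hb)
  show ?thesis by (rule indep_var_lebesgue_integral[OF I3 int1 int2])
qed

lemma X_iff: "y \<in> X j \<longleftrightarrow> 0 \<le> 1 - y \<and> 1 - y \<le> cc \<alpha> j"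
  by (rule pow_thr_iff[OF a0])

lemma E_X: "(\<integral>\<omega>. indicator (X j) (Y t \<omega>) \<partial>M) = cc \<alpha> j powr k"
proof -
  have s: "{\<omega> \<in> space M. Y t \<omega> \<in> X j} \<in> sets M" by measurable
  have "(\<integral>\<omega>. indicator (X j) (Y t \<omega>) \<partial>M) = (\<integral>\<omega>. indicator {\<omega> \<in> space M. Y t \<omega> \<in> X j} \<omega> \<partial>M :: real)"
    by (intro Bochner_Integration.integral_cong) (auto simp: indicator_def)
  also have "\<dots> = measure M {\<omega> \<in> space M. Y t \<omega> \<in> X j}"
    using s by (simp add: emeasure_eq_measure)
  also have "{\<omega> \<in> space M. Y t \<omega> \<in> X j} = {\<omega> \<in> space M. 0 \<le> 1 - Y t \<omega> \<and> 1 - Y t \<omega> \<le> cc \<alpha> j}"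
    using X_iff by auto
  also have "measure M \<dots> = cc \<alpha> j powr k"
    by (rule P_X) (auto intro: less_imp_le cc_pos cc_le1 a0)
  finally show ?thesis .
qed

definition "mu = (\<integral>\<omega>. 1 - Y 0 \<omega> \<partial>M :: real)"

lemma E_GX: "(\<integral>\<omega>. (1 - Y t \<omega>) * indicator (X j) (Y t \<omega>) \<partial>M) = cc \<alpha> j powr k * cc \<alpha> j * mu"
proof -
  have "(\<integral>\<omega>. (1 - Y t \<omega>) * indicator (X j) (Y t \<omega>) \<partial>M) =
        (\<integral>\<omega>. indicator {0<..cc \<alpha> j} (1 - Y t \<omega>) * (1 - Y t \<omega>) \<partial>M :: real)"
    by (intro Bochner_Integration.integral_cong) (auto simp: indicator_def X_iff)
  also have "\<dots> = cc \<alpha> j powr k * cc \<alpha> j * mu"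
    unfolding mu_def by (rule scale) (auto intro: cc_pos cc_le1 a0)
  finally show ?thesis .
qed

lemma E_sel: "(\<integral>\<omega>. indicator {j} (ns t \<omega>) * indicator (X j) (Y t \<omega>) \<partial>M) =
    (\<integral>\<omega>. indicator {j} (ns t \<omega>) \<partial>M) * cc \<alpha> j powr k"
  using indep_ns[of "indicator (X j)" 1 j t] E_X by (simp add: indicator_def)

lemma E_selG: "(\<integral>\<omega>. indicator {j} (ns t \<omega>) * ((1 - Y t \<omega>) * indicator (X j) (Y t \<omega>)) \<partial>M) =
    (\<integral>\<omega>. indicator {j} (ns t \<omega>) \<partial>M) * (cc \<alpha> j powr k * cc \<alpha> j * mu)"
proof -
  have hb: "\<bar>(1 - y) * indicator (X j) y\<bar> \<le> 1" for y
    using X_iff[of y j] cc_le1[OF a0, of j] by (auto simp: indicator_def)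
  show ?thesis using indep_ns[of "\<lambda>y. (1 - y) * indicator (X j) y" 1 j t, OF _ hb] E_GX by simp
qed

end
lemma rec_lim:
  fixes A B P :: "nat \<Rightarrow> real"
  assumes AB: "\<And>N. A N = B N + P N" and AS: "\<And>N. A (Suc N) = B N + (1 - s) * P N"
    and P0: "\<And>N. 0 \<le> P N" and B0: "\<And>N. 0 \<le> B N" and s: "0 < s" and Bl: "B \<longlonglongrightarrow> 0"
  shows "A \<longlonglongrightarrow> 0"
proof -
  have dec: "decseq A"
  proof (rule decseq_SucI)
    fix N
    have "(1 - s) * P N \<le> P N" using s P0[of N] by (simp add: algebra_simps)
    then show "A (Suc N) \<le> A N" using AB[of N] AS[of N] by simp
  qed
  have "\<forall>i. 0 \<le> A i" using AB P0 B0 by (simp add: add_nonneg_nonneg)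
  then obtain L where L: "A \<longlonglongrightarrow> L" using decseq_convergent[OF dec] by blast
  have eq: "(\<lambda>N. A (Suc N) - (1 - s) * A N) = (\<lambda>N. s * B N)"
  proof
    fix N show "A (Suc N) - (1 - s) * A N = s * B N" using AB[of N] AS[of N] by (simp add: algebra_simps)
  qed
  have "(\<lambda>N. A (Suc N) - (1 - s) * A N) \<longlonglongrightarrow> L - (1 - s) * L"
    by (intro tendsto_intros LIMSEQ_Suc L)
  moreover have "(\<lambda>N. s * B N) \<longlonglongrightarrow> s * 0" by (intro tendsto_intros Bl)
  ultimately have "L - (1 - s) * L = s * 0" unfolding eq using LIMSEQ_unique by blast
  then have "L = 0" using s by (simp add: algebra_simps)
  then show ?thesis using L by simp
qed

context model
begin

lemma ns_Suc: "ns (Suc t) \<omega> = ns t \<omega> + (if Y t \<omega> \<in> X (ns t \<omega>) then 1 else 0)"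
  unfolding ns_def by simp

lemma ind_meas[measurable]:
  "(\<lambda>\<omega>. indicator S (ns t \<omega>) :: real) \<in> borel_measurable M"
  by (rule measurable_compose[OF ns_meas]) simp

lemma intI: fixes B :: real shows "f \<in> borel_measurable M \<Longrightarrow> (\<And>\<omega>. \<bar>f \<omega>\<bar> \<le> B) \<Longrightarrow> integrable M f"
  by (rule integrable_const_bound[where B=B]) auto

lemma tele: "(\<Sum>t<N. indicator {j} (ns t \<omega>) * indicator (X j) (Y t \<omega>)) = (indicator {j<..} (ns N \<omega>) :: real)"
proof (induction N)
  case 0
  then show ?case by (simp add: ns_def)
next
  case (Suc N)
  have "(\<Sum>t<Suc N. indicator {j} (ns t \<omega>) * indicator (X j) (Y t \<omega>)) =
     (indicator {j<..} (ns N \<omega>) :: real) + indicator {j} (ns N \<omega>) * indicator (X j) (Y N \<omega>)"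
    using Suc by simp
  also have "\<dots> = indicator {j<..} (ns (Suc N) \<omega>)"
    by (cases "ns N \<omega> = j") (auto simp: ns_Suc indicator_def)
  finally show ?case .
qed

definition "aa j N = (\<integral>\<omega>. indicator {..<j} (ns N \<omega>) \<partial>M :: real)"
definition "pp N j = (\<integral>\<omega>. indicator {j} (ns N \<omega>) \<partial>M :: real)"

lemma int_ind: "integrable M (\<lambda>\<omega>. indicator S (ns t \<omega>) :: real)"
  by (rule intI[where B=1]) (auto simp: indicator_def)

lemma int_indX: "integrable M (\<lambda>\<omega>. indicator S (ns t \<omega>) * indicator (X j) (Y t \<omega>) :: real)"
  by (rule intI[where B=1]) (auto simp: indicator_def)

lemma aa_lim: "(\<lambda>N. aa j N) \<longlonglongrightarrow> 0"
proof (induction j)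
  case 0
  then show ?case by (simp add: aa_def)
next
  case (Suc j)
  let ?s = "cc \<alpha> j powr k"
  show ?case
  proof (rule rec_lim[of "aa (Suc j)" "\<lambda>N. aa j N" "\<lambda>N. pp N j" ?s])
    show "aa (Suc j) N = aa j N + pp N j" for N
    proof -
      have "(\<lambda>\<omega>. indicator {..<Suc j} (ns N \<omega>) :: real) =
            (\<lambda>\<omega>. indicator {..<j} (ns N \<omega>) + indicator {j} (ns N \<omega>))"
        by (auto simp: indicator_def)
      then show ?thesis unfolding aa_def pp_def by (simp add: int_ind)
    qed
    show "aa (Suc j) (Suc N) = aa j N + (1 - ?s) * pp N j" for N
    proof -
      have "(\<lambda>\<omega>. indicator {..<Suc j} (ns (Suc N) \<omega>) :: real) =
            (\<lambda>\<omega>. indicator {..<j} (ns N \<omega>) + (indicator {j} (ns N \<omega>)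
                  - indicator {j} (ns N \<omega>) * indicator (X j) (Y N \<omega>)))"
      proof (rule ext)
        fix \<omega>
        show "indicator {..<Suc j} (ns (Suc N) \<omega>) = indicator {..<j} (ns N \<omega>) + (indicator {j} (ns N \<omega>)
                  - indicator {j} (ns N \<omega>) * indicator (X j) (Y N \<omega>) :: real)"
          by (cases "ns N \<omega> < j"; cases "ns N \<omega> = j") (auto simp: indicator_def ns_Suc)
      qed
      then have "aa (Suc j) (Suc N) = aa j N + (pp N j - pp N j * ?s)"
        unfolding aa_def pp_def using E_sel[of j N]
        by (simp add: int_ind int_indX Bochner_Integration.integral_diff)
      then show ?thesis by (simp add: algebra_simps)
    qed
    show "0 \<le> pp N j" for N unfolding pp_def by (simp add: integral_nonneg_AE)
    show "0 \<le> aa j N" for N unfolding aa_def by (simp add: integral_nonneg_AE)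
    show "0 < ?s" using cc_pos[of \<alpha> j] by simp
    show "(\<lambda>N. aa j N) \<longlonglongrightarrow> 0" by (rule Suc)
  qed
qed

end
lemma gap_of_nonneg: "(\<And>t. y t \<le> 1) \<Longrightarrow> 0 \<le> gap_of y I"
proof -
  assume y1: "\<And>t. y t \<le> 1"
  show ?thesis
  proof (cases "finite I \<and> card I > 0")
    case True
    have "sum y I \<le> (\<Sum>t\<in>I. 1)" using y1 by (intro sum_mono) auto
    then have "sum y I \<le> real (card I)" by simp
    then show ?thesis using True unfolding gap_of_def by (simp add: divide_le_eq_1)
  next
    case False
    then have "card I = 0" by auto
    then show ?thesis unfolding gap_of_def by simp
  qed
qed

context model
begin

definition "qq N j = (\<integral>\<omega>. indicator {j<..} (ns N \<omega>) \<partial>M :: real)"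

definition "Z N j \<omega> = (\<Sum>t<N. indicator {j} (ns t \<omega>) * ((1 - Y t \<omega>) * indicator (X j) (Y t \<omega>)) :: real)"

lemma int_indG: "integrable M (\<lambda>\<omega>. indicator S (ns t \<omega>) * ((1 - Y t \<omega>) * indicator (X j) (Y t \<omega>)) :: real)"
proof (rule intI[where B=1])
  show "\<bar>indicator S (ns t \<omega>) * ((1 - Y t \<omega>) * indicator (X j) (Y t \<omega>))\<bar> \<le> (1::real)" for \<omega>
    using X_iff[of "Y t \<omega>" j] cc_le1[OF a0, of j] by (auto simp: indicator_def)
qed auto

lemma Z_meas[measurable]: "Z N j \<in> borel_measurable M"
  unfolding Z_def by measurable

lemma int_Z: "integrable M (Z N j)"
  unfolding Z_def by (intro Bochner_Integration.integrable_sum int_indG)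

lemma qq_le1: "qq N j \<le> 1"
proof -
  have "qq N j \<le> (\<integral>\<omega>. 1 \<partial>M)" unfolding qq_def
    by (intro integral_mono int_ind) (auto simp: indicator_def)
  then show ?thesis by (simp add: prob_space)
qed

lemma qq_aa: "qq N j = 1 - aa (Suc j) N"
proof -
  have "(\<lambda>\<omega>. indicator {j<..} (ns N \<omega>) :: real) = (\<lambda>\<omega>. 1 - indicator {..<Suc j} (ns N \<omega>))"
    by (auto simp: indicator_def)
  then show ?thesis unfolding qq_def aa_def
    by (simp add: Bochner_Integration.integral_diff int_ind prob_space)
qed

lemma E_Z: "(\<integral>\<omega>. Z N j \<omega> \<partial>M) = cc \<alpha> j * mu * qq N j"
proof -
  have "(\<integral>\<omega>. Z N j \<omega> \<partial>M) = (\<Sum>t<N. \<integral>\<omega>. indicator {j} (ns t \<omega>) * ((1 - Y t \<omega>) * indicator (X j) (Y t \<omega>)) \<partial>M)"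
    unfolding Z_def by (rule Bochner_Integration.integral_sum) (rule int_indG)
  also have "\<dots> = (\<Sum>t<N. pp t j * (cc \<alpha> j powr k * cc \<alpha> j * mu))"
    using E_selG unfolding pp_def by simp
  also have "\<dots> = cc \<alpha> j * mu * (\<Sum>t<N. pp t j * cc \<alpha> j powr k)"
    by (simp add: sum_distrib_left algebra_simps)
  also have "(\<Sum>t<N. pp t j * cc \<alpha> j powr k) = (\<Sum>t<N. \<integral>\<omega>. indicator {j} (ns t \<omega>) * indicator (X j) (Y t \<omega>) \<partial>M)"
    using E_sel unfolding pp_def by simp
  also have "\<dots> = (\<integral>\<omega>. (\<Sum>t<N. indicator {j} (ns t \<omega>) * indicator (X j) (Y t \<omega>)) \<partial>M)"
    by (rule Bochner_Integration.integral_sum[symmetric]) (rule int_indX)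
  also have "\<dots> = qq N j" unfolding qq_def tele ..
  finally show ?thesis .
qed

lemma f_decomp:
  "(1 - Y t \<omega>) * (if selected X (\<lambda>i. Y i \<omega>) t \<and> nsel X (\<lambda>i. Y i \<omega>) t < n then 1 else 0) =
   (\<Sum>j<n. indicator {j} (ns t \<omega>) * ((1 - Y t \<omega>) * indicator (X j) (Y t \<omega>)))"
proof -
  have "(\<Sum>j<n. indicator {j} (ns t \<omega>) * ((1 - Y t \<omega>) * indicator (X j) (Y t \<omega>))) =
        (\<Sum>j<n. if ns t \<omega> = j then (1 - Y t \<omega>) * indicator (X j) (Y t \<omega>) else 0)"
    by (intro sum.cong) (auto simp: indicator_def)
  also have "\<dots> = (if ns t \<omega> < n then (1 - Y t \<omega>) * indicator (X (ns t \<omega>)) (Y t \<omega>) else 0)"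
    by (simp add: sum.delta)
  finally show ?thesis by (simp add: selected_def ns_def indicator_def)
qed

lemma h_decomp:
  assumes n1: "n \<ge> 1"
  shows "(\<Sum>j<n. (cc \<alpha> (n - 1) / cc \<alpha> j) * (indicator {j} (ns t \<omega>) * ((1 - Y t \<omega>) * indicator (X j) (Y t \<omega>))))
     \<le> min (1 - Y t \<omega>) (cc \<alpha> (n - 1)) *
        (if selected X (\<lambda>i. Y i \<omega>) t \<and> nsel X (\<lambda>i. Y i \<omega>) t < n then 1 else 0)"
proof -
  let ?c = "cc \<alpha> (n - 1)"
  have "(\<Sum>j<n. (?c / cc \<alpha> j) * (indicator {j} (ns t \<omega>) * ((1 - Y t \<omega>) * indicator (X j) (Y t \<omega>)))) =
        (\<Sum>j<n. if ns t \<omega> = j then (?c / cc \<alpha> j) * ((1 - Y t \<omega>) * indicator (X j) (Y t \<omega>)) else 0)"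
    by (intro sum.cong) (auto simp: indicator_def)
  also have "\<dots> = (if ns t \<omega> < n then (?c / cc \<alpha> (ns t \<omega>)) * ((1 - Y t \<omega>) * indicator (X (ns t \<omega>)) (Y t \<omega>)) else 0)"
    by (simp add: sum.delta)
  also have "\<dots> \<le> min (1 - Y t \<omega>) ?c *
        (if selected X (\<lambda>i. Y i \<omega>) t \<and> nsel X (\<lambda>i. Y i \<omega>) t < n then 1 else 0)"
  proof (cases "ns t \<omega> < n \<and> Y t \<omega> \<in> X (ns t \<omega>)")
    case True
    let ?d = "cc \<alpha> (ns t \<omega>)"
    have d: "0 < ?d" by (rule cc_pos)
    have cd: "?c \<le> ?d" using True by (intro cc_anti a0) auto
    have c0: "0 < ?c" by (rule cc_pos)
    have G: "0 \<le> 1 - Y t \<omega>" "1 - Y t \<omega> \<le> ?d" using True X_iff by auto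
    have "(?c / ?d) * (1 - Y t \<omega>) \<le> min (1 - Y t \<omega>) ?c"
    proof (cases "1 - Y t \<omega> \<le> ?c")
      case True
      have "(?c / ?d) * (1 - Y t \<omega>) \<le> 1 * (1 - Y t \<omega>)"
        using cd d G by (intro mult_right_mono) auto
      then show ?thesis using True by simp
    next
      case False
      have "(?c / ?d) * (1 - Y t \<omega>) \<le> (?c / ?d) * ?d"
        using G c0 d by (intro mult_left_mono) auto
      then show ?thesis using False d by simp
    qed
    then show ?thesis using True by (simp add: selected_def ns_def indicator_def)
  next
    case False
    have ns: "\<not> (selected X (\<lambda>i. Y i \<omega>) t \<and> nsel X (\<lambda>i. Y i \<omega>) t < n)"
      using False unfolding selected_def ns_def by blast
    show ?thesis using False ns by (auto simp: indicator_def)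
  qed
  finally show ?thesis .
qed

end
context model
begin

lemma aa_measure: "aa j N = measure M {\<omega> \<in> space M. ns N \<omega> < j}"
proof -
  have s: "{\<omega> \<in> space M. ns N \<omega> < j} \<in> sets M" by measurable
  have "aa j N = (\<integral>\<omega>. indicator {\<omega> \<in> space M. ns N \<omega> < j} \<omega> \<partial>M :: real)"
    unfolding aa_def by (intro Bochner_Integration.integral_cong) (auto simp: indicator_def)
  also have "\<dots> = measure M {\<omega> \<in> space M. ns N \<omega> < j}"
    using s by (simp add: emeasure_eq_measure)
  finally show ?thesis .
qed

lemma AE_reach: "AE \<omega> in M. \<exists>N. n \<le> ns N \<omega>"
proof -
  let ?S = "{\<omega> \<in> space M. \<not> (\<exists>N. n \<le> ns N \<omega>)}"
  have Sm: "?S \<in> sets M" by measurable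
  have le: "measure M ?S \<le> aa n N" for N
    unfolding aa_measure by (intro finite_measure_mono) (auto simp: not_le)
  have "measure M ?S \<le> 0"
    by (rule LIMSEQ_le_const[OF aa_lim[of n]]) (use le in auto)
  then have "measure M ?S = 0" using measure_nonneg[of M ?S] by linarith
  then show ?thesis
    by (subst AE_iff_measurable[OF Sm refl]) (simp add: emeasure_eq_measure)
qed

lemma mu_nonneg: "0 \<le> mu"
  unfolding mu_def by (rule integral_nonneg_AE) (use AE_Y01[of 0] in auto)

lemma sumZ: "(\<Sum>t<N. (1 - Y t \<omega>) * (if selected X (\<lambda>i. Y i \<omega>) t \<and> nsel X (\<lambda>i. Y i \<omega>) t < n then 1 else 0))
   = (\<Sum>j<n. Z N j \<omega>)"
  unfolding f_decomp Z_def by (rule sum.swap)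

lemma upper:
  assumes n1: "n \<ge> 1" and int: "integrable M (\<lambda>\<omega>. Gap X (\<lambda>t. Y t \<omega>) n)"
  shows "real n * (\<integral>\<omega>. Gap X (\<lambda>t. Y t \<omega>) n \<partial>M) \<le> mu * (\<Sum>j<n. cc \<alpha> j)"
proof -
  have bound: "real n * (\<integral>\<omega>. Gap X (\<lambda>t. Y t \<omega>) n \<partial>M) \<le> mu * (\<Sum>j<n. cc \<alpha> j) + real n * aa n N" for N
  proof -
    have "real n * (\<integral>\<omega>. Gap X (\<lambda>t. Y t \<omega>) n \<partial>M) = (\<integral>\<omega>. real n * Gap X (\<lambda>t. Y t \<omega>) n \<partial>M)"
      by simp
    also have "\<dots> \<le> (\<integral>\<omega>. (\<Sum>j<n. Z N j \<omega>) + real n * indicator {..<n} (ns N \<omega>) \<partial>M)"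
    proof (rule integral_mono_AE)
      show "integrable M (\<lambda>\<omega>. real n * Gap X (\<lambda>t. Y t \<omega>) n)" using int by simp
      show "integrable M (\<lambda>\<omega>. (\<Sum>j<n. Z N j \<omega>) + real n * indicator {..<n} (ns N \<omega>))"
        by (intro Bochner_Integration.integrable_add Bochner_Integration.integrable_sum int_Z
            Bochner_Integration.integrable_mult_right int_ind)
      show "AE \<omega> in M. real n * Gap X (\<lambda>t. Y t \<omega>) n \<le> (\<Sum>j<n. Z N j \<omega>) + real n * indicator {..<n} (ns N \<omega>)"
        using AE_all01
      proof eventually_elim
        case (elim \<omega>)
        have g: "real n * Gap X (\<lambda>t. Y t \<omega>) n \<le> (\<Sum>t<N. (1 - Y t \<omega>) *
           (if selected X (\<lambda>i. Y i \<omega>) t \<and> nsel X (\<lambda>i. Y i \<omega>) t < n then 1 else 0))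
            + real n * (if nsel X (\<lambda>i. Y i \<omega>) N < n then 1 else 0)"
          by (rule gap_up) (use elim n1 in auto)
        have eqind: "indicator {..<n} (ns N \<omega>) = (if nsel X (\<lambda>i. Y i \<omega>) N < n then 1 else (0::real))"
          by (simp add: ns_def indicator_def)
        show ?case unfolding eqind using g unfolding sumZ .
      qed
    qed
    also have "\<dots> = (\<Sum>j<n. cc \<alpha> j * mu * qq N j) + real n * aa n N"
      by (simp add: Bochner_Integration.integral_add Bochner_Integration.integrable_sum int_Z int_ind
          Bochner_Integration.integral_sum E_Z aa_def)
    also have "(\<Sum>j<n. cc \<alpha> j * mu * qq N j) \<le> (\<Sum>j<n. cc \<alpha> j * mu)"
    proof (rule sum_mono)
      fix j
      have "0 \<le> cc \<alpha> j * mu" using cc_pos[of \<alpha> j] mu_nonneg by simp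
      then show "cc \<alpha> j * mu * qq N j \<le> cc \<alpha> j * mu"
        using qq_le1[of N j] by (simp add: mult_left_le)
    qed
    also have "(\<Sum>j<n. cc \<alpha> j * mu) = mu * (\<Sum>j<n. cc \<alpha> j)"
      by (simp add: sum_distrib_left mult.commute)
    finally show ?thesis by simp
  qed
  have "(\<lambda>N. mu * (\<Sum>j<n. cc \<alpha> j) + real n * aa n N) \<longlonglongrightarrow> mu * (\<Sum>j<n. cc \<alpha> j) + real n * 0"
    by (intro tendsto_intros aa_lim)
  then have "(\<lambda>N. mu * (\<Sum>j<n. cc \<alpha> j) + real n * aa n N) \<longlonglongrightarrow> mu * (\<Sum>j<n. cc \<alpha> j)" by simp
  then show ?thesis
    by (rule LIMSEQ_le_const) (use bound in auto)
qed

lemma lower: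
  assumes n1: "n \<ge> 1" and int: "integrable M (\<lambda>\<omega>. Gap_opt X (\<lambda>t. Y t \<omega>) n)"
  shows "cc \<alpha> (n - 1) * mu \<le> (\<integral>\<omega>. Gap_opt X (\<lambda>t. Y t \<omega>) n \<partial>M)"
proof -
  let ?c = "cc \<alpha> (n - 1)"
  have bound: "real n * (?c * mu) * (1 - aa n N) \<le> real n * (\<integral>\<omega>. Gap_opt X (\<lambda>t. Y t \<omega>) n \<partial>M)" for N
  proof -
    have "(\<Sum>j<n. qq N j) = (\<integral>\<omega>. (\<Sum>j<n. indicator {j<..} (ns N \<omega>)) \<partial>M)"
      unfolding qq_def by (rule Bochner_Integration.integral_sum[symmetric]) (rule int_ind)
    also have "\<dots> \<ge> (\<integral>\<omega>. real n * (1 - indicator {..<n} (ns N \<omega>)) \<partial>M)"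
    proof (rule integral_mono)
      show "integrable M (\<lambda>\<omega>. real n * (1 - indicator {..<n} (ns N \<omega>)))"
        by (intro Bochner_Integration.integrable_mult_right Bochner_Integration.integrable_diff int_ind) simp
      show "integrable M (\<lambda>\<omega>. \<Sum>j<n. indicator {j<..} (ns N \<omega>) :: real)"
        by (intro Bochner_Integration.integrable_sum int_ind)
      fix \<omega>
      show "real n * (1 - indicator {..<n} (ns N \<omega>)) \<le> (\<Sum>j<n. indicator {j<..} (ns N \<omega>) :: real)"
      proof (cases "ns N \<omega> < n")
        case True then show ?thesis by (simp add: indicator_def sum_nonneg)
      next
        case False
        then have "(\<Sum>j<n. indicator {j<..} (ns N \<omega>) :: real) = (\<Sum>j<n. 1)"
          by (intro sum.cong) (auto simp: indicator_def)
        then show ?thesis using False by (simp add: indicator_def)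
      qed
    qed
    also have "(\<integral>\<omega>. real n * (1 - indicator {..<n} (ns N \<omega>)) \<partial>M) = real n * (1 - aa n N)"
      by (simp add: Bochner_Integration.integral_diff int_ind aa_def prob_space)
    finally have sq: "real n * (1 - aa n N) \<le> (\<Sum>j<n. qq N j)" .
    have "real n * (?c * mu) * (1 - aa n N) = (?c * mu) * (real n * (1 - aa n N))" by simp
    also have "\<dots> \<le> (?c * mu) * (\<Sum>j<n. qq N j)"
      using sq cc_pos[of \<alpha> "n - 1"] mu_nonneg by (intro mult_left_mono) auto
    also have "\<dots> = (\<Sum>j<n. ?c * mu * qq N j)" by (simp add: sum_distrib_left)
    also have "\<dots> = (\<Sum>j<n. (?c / cc \<alpha> j) * (cc \<alpha> j * mu * qq N j))"
    proof (rule sum.cong)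
      fix j show "?c * mu * qq N j = (?c / cc \<alpha> j) * (cc \<alpha> j * mu * qq N j)"
        using cc_pos[of \<alpha> j] by (simp add: field_simps)
    qed simp
    also have "\<dots> = (\<integral>\<omega>. (\<Sum>j<n. (?c / cc \<alpha> j) * Z N j \<omega>) \<partial>M)"
      by (simp add: Bochner_Integration.integral_sum int_Z E_Z)
    also have "\<dots> \<le> (\<integral>\<omega>. real n * Gap_opt X (\<lambda>t. Y t \<omega>) n \<partial>M)"
    proof (rule integral_mono_AE)
      show "integrable M (\<lambda>\<omega>. \<Sum>j<n. ?c / cc \<alpha> j * Z N j \<omega>)"
        by (intro Bochner_Integration.integrable_sum Bochner_Integration.integrable_mult_right int_Z)
      show "integrable M (\<lambda>\<omega>. real n * Gap_opt X (\<lambda>t. Y t \<omega>) n)" using int by simp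
      show "AE \<omega> in M. (\<Sum>j<n. ?c / cc \<alpha> j * Z N j \<omega>) \<le> real n * Gap_opt X (\<lambda>t. Y t \<omega>) n"
        using AE_all01 AE_reach[of n]
      proof eventually_elim
        case (elim \<omega>)
        then obtain N0 where N0: "n \<le> ns N0 \<omega>" by blast
        have "(\<Sum>j<n. ?c / cc \<alpha> j * Z N j \<omega>) =
              (\<Sum>t<N. \<Sum>j<n. (?c / cc \<alpha> j) * (indicator {j} (ns t \<omega>) * ((1 - Y t \<omega>) * indicator (X j) (Y t \<omega>))))"
          unfolding Z_def sum_distrib_left by (rule sum.swap)
        also have "\<dots> \<le> (\<Sum>t<N. min (1 - Y t \<omega>) ?c *
            (if selected X (\<lambda>i. Y i \<omega>) t \<and> nsel X (\<lambda>i. Y i \<omega>) t < n then 1 else 0))"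
          by (intro sum_mono h_decomp n1)
        also have "\<dots> \<le> real n * Gap_opt X (\<lambda>t. Y t \<omega>) n"
        proof -
          have y01: "\<And>t. 0 \<le> Y t \<omega> \<and> Y t \<omega> \<le> 1" using elim by auto
          have r: "n \<le> nsel X (\<lambda>t. Y t \<omega>) N0" using N0 by (simp add: ns_def)
          show ?thesis using gapopt_low[of "\<lambda>t. Y t \<omega>" n \<alpha> N0 N, OF y01 n1 a0 r] by simp
        qed
        finally show ?case .
      qed
    qed
    also have "\<dots> = real n * (\<integral>\<omega>. Gap_opt X (\<lambda>t. Y t \<omega>) n \<partial>M)" by simp
    finally show ?thesis .
  qed
  have "(\<lambda>N. real n * (?c * mu) * (1 - aa n N)) \<longlonglongrightarrow> real n * (?c * mu) * (1 - 0)"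
    by (intro tendsto_intros aa_lim)
  then have "real n * (?c * mu) * (1 - 0) \<le> real n * (\<integral>\<omega>. Gap_opt X (\<lambda>t. Y t \<omega>) n \<partial>M)"
    by (rule LIMSEQ_le_const2) (use bound in auto)
  then show ?thesis using n1 by simp
qed

lemma Gap_nonneg: "0 \<le> (\<integral>\<omega>. Gap X (\<lambda>t. Y t \<omega>) n \<partial>M)"
  by (rule integral_nonneg_AE) (use AE_all01 in \<open>auto simp: Gap_def intro!: gap_of_nonneg\<close>)

lemma Gap_opt_nonneg:
  assumes n1: "n \<ge> 1"
  shows "0 \<le> (\<integral>\<omega>. Gap_opt X (\<lambda>t. Y t \<omega>) n \<partial>M)"
proof (rule integral_nonneg_AE)
  show "AE \<omega> in M. 0 \<le> Gap_opt X (\<lambda>t. Y t \<omega>) n"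
    using AE_all01 AE_reach[of n]
  proof eventually_elim
    case (elim \<omega>)
    then obtain N0 where N0: "n \<le> ns N0 \<omega>" by blast
    have y01: "\<And>t. 0 \<le> Y t \<omega> \<and> Y t \<omega> \<le> 1" using elim by auto
    have r: "n \<le> nsel X (\<lambda>t. Y t \<omega>) N0" using N0 by (simp add: ns_def)
    have "0 \<le> real n * Gap_opt X (\<lambda>t. Y t \<omega>) n"
      using gapopt_low[of "\<lambda>t. Y t \<omega>" n \<alpha> N0 0, OF y01 n1 a0 r] by simp
    then show ?case using n1 by (simp add: zero_le_mult_iff)
  qed
qed

lemma ratio:
  assumes n1: "n \<ge> 1"
  shows "(\<integral>\<omega>. Gap X (\<lambda>t. Y t \<omega>) n \<partial>M) / (\<integral>\<omega>. Gap_opt X (\<lambda>t. Y t \<omega>) n \<partial>M) \<le> 2 / (1 - \<alpha>)"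
proof -
  define A where "A = (\<integral>\<omega>. Gap X (\<lambda>t. Y t \<omega>) n \<partial>M)"
  define B where "B = (\<integral>\<omega>. Gap_opt X (\<lambda>t. Y t \<omega>) n \<partial>M)"
  let ?c = "cc \<alpha> (n - 1)"
  let ?S = "\<Sum>j<n. cc \<alpha> j"
  have C0: "0 < 2 / (1 - \<alpha>)" using a1 by simp
  have A0: "0 \<le> A" unfolding A_def by (rule Gap_nonneg)
  have B0: "0 \<le> B" unfolding B_def by (rule Gap_opt_nonneg[OF n1])
  show ?thesis
  proof (cases "B = 0 \<or> A = 0")
    case True
    then show ?thesis using C0 unfolding A_def[symmetric] B_def[symmetric] by auto
  next
    case False
    then have Bp: "B > 0" and Ap: "A > 0" using A0 B0 by auto
    have intB: "integrable M (\<lambda>\<omega>. Gap_opt X (\<lambda>t. Y t \<omega>) n)"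
      using Bp not_integrable_integral_eq unfolding B_def by force
    have intA: "integrable M (\<lambda>\<omega>. Gap X (\<lambda>t. Y t \<omega>) n)"
      using Ap not_integrable_integral_eq unfolding A_def by force
    have lo: "?c * mu \<le> B" unfolding B_def by (rule lower[OF n1 intB])
    have up: "real n * A \<le> mu * ?S" unfolding A_def by (rule upper[OF n1 intA])
    have np: "real n > 0" using n1 by simp
    have "0 < real n * A" using np Ap by simp
    then have "0 < mu * ?S" using up by simp
    then have mup: "0 < mu" using mu_nonneg
      by (metis mult_zero_left order_le_less)
    have cp: "0 < ?c" by (rule cc_pos)
    have "A / B \<le> A / (?c * mu)"
      using Ap lo cp mup Bp by (intro divide_left_mono) auto
    also have "\<dots> \<le> (mu * ?S / real n) / (?c * mu)"
      using up np cp mup by (intro divide_right_mono) (auto simp: pos_le_divide_eq mult.commute)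
    also have "\<dots> = ?S / (real n * ?c)"
      using mup np cp by (simp add: field_simps)
    also have "\<dots> \<le> 2 / (1 - \<alpha>)"
      using sum_cc_bound[OF a0 a1 n1] np cp by (simp add: divide_le_eq mult.commute)
    finally show ?thesis unfolding A_def B_def .
  qed
qed

end

theorem theorem1:
  fixes \<alpha> :: real
  assumes "0 \<le> \<alpha>" and "\<alpha> < 1"
  shows "\<exists>C::real. \<forall>(k::real) (M::(nat \<Rightarrow> real) measure) (Y::nat \<Rightarrow> (nat \<Rightarrow> real) \<Rightarrow> real).
     k > 0 \<and> prob_space M
     \<and> (\<forall>i. Y i \<in> borel_measurable M)
     \<and> prob_space.indep_vars M (\<lambda>_. borel) Y UNIV
     \<and> (\<forall>i x. 0 \<le> x \<and> x \<le> 1 \<longrightarrow> measure M {\<omega> \<in> space M. 1 - Y i \<omega> \<le> x} = x powr k)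
     \<longrightarrow> (\<forall>n::nat. n \<ge> 1 \<longrightarrow>
            (\<integral>\<omega>. Gap (pow_thr \<alpha>) (\<lambda>t. Y t \<omega>) n \<partial>M)
              / (\<integral>\<omega>. Gap_opt (pow_thr \<alpha>) (\<lambda>t. Y t \<omega>) n \<partial>M) \<le> C)"
proof (intro exI[of _ "2 / (1 - \<alpha>)"] allI impI)
  fix k :: real and M :: "(nat \<Rightarrow> real) measure" and Y :: "nat \<Rightarrow> (nat \<Rightarrow> real) \<Rightarrow> real" and n :: nat
  assume H: "k > 0 \<and> prob_space M
     \<and> (\<forall>i. Y i \<in> borel_measurable M)
     \<and> prob_space.indep_vars M (\<lambda>_. borel) Y UNIV
     \<and> (\<forall>i x. 0 \<le> x \<and> x \<le> 1 \<longrightarrow> measure M {\<omega> \<in> space M. 1 - Y i \<omega> \<le> x} = x powr k)"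
    and n1: "n \<ge> 1"
  have "model M k \<alpha> Y"
    unfolding model_def model_axioms_def using H assms by auto
  then interpret model M k \<alpha> Y .
  show "(\<integral>\<omega>. Gap (pow_thr \<alpha>) (\<lambda>t. Y t \<omega>) n \<partial>M)
              / (\<integral>\<omega>. Gap_opt (pow_thr \<alpha>) (\<lambda>t. Y t \<omega>) n \<partial>M) \<le> 2 / (1 - \<alpha>)"
    by (rule ratio[OF n1])
qed

end
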